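(* Fix an integer $\Delta\geq 2$. There exists $N$ (depending on $\Delta$) such that for every $2$-connected finite simple graph $G$ on $n\geq N$ vertices with maximum degree $\Delta$, the polynomial $\mathrm{nRel}(G;p)$ has at least two fixed points in $(0,1)$, i.e. at least two distinct $p\in(0,1)$ with $\mathrm{nRel}(G;p)=p$.
   Context: For a graph $G$ on $n$ vertices, a connected set is a nonempty vertex subset $C$ such that the induced subgraph $G[C]$ is connected. The node reliability of $G$ is the polynomial \[ \mathrm{nRel}(G;p)=\sum_{C}p^{|C|}(1-p)^{n-|C|}, \] the sum over all connected sets $C$ of $G$. *)

theory Defs
  imports Complex_Main
begin

definition simple_graph :: "'a set \<Rightarrow> ('a \<Rightarrow> 'a \<Rightarrow> bool) \<Rightarrow> bool" where
  "simple_graph V E \<longleftrightarrow> finite V \<and> (\<forall>u v. E u v \<longrightarrow> E v u)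
     \<and> (\<forall>v. \<not> E v v) \<and> (\<forall>u v. E u v \<longrightarrow> u \<in> V \<and> v \<in> V)"

definition induced_connected :: "('a \<Rightarrow> 'a \<Rightarrow> bool) \<Rightarrow> 'a set \<Rightarrow> bool" where
  "induced_connected E C \<longleftrightarrow> C \<noteq> {} \<and>
     (\<forall>u\<in>C. \<forall>v\<in>C. (\<lambda>x y. x \<in> C \<and> y \<in> C \<and> E x y)\<^sup>*\<^sup>* u v)"

definition connected_set :: "'a set \<Rightarrow> ('a \<Rightarrow> 'a \<Rightarrow> bool) \<Rightarrow> 'a set \<Rightarrow> bool" where
  "connected_set V E C \<longleftrightarrow> C \<subseteq> V \<and> induced_connected E C"

definition nRel :: "'a set \<Rightarrow> ('a \<Rightarrow> 'a \<Rightarrow> bool) \<Rightarrow> real \<Rightarrow> real" where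
  "nRel V E p = (\<Sum>C\<in>{C. connected_set V E C}. p ^ card C * (1 - p) ^ (card V - card C))"

definition degree :: "'a set \<Rightarrow> ('a \<Rightarrow> 'a \<Rightarrow> bool) \<Rightarrow> 'a \<Rightarrow> nat" where
  "degree V E v = card {u\<in>V. E v u}"

definition max_degree :: "'a set \<Rightarrow> ('a \<Rightarrow> 'a \<Rightarrow> bool) \<Rightarrow> nat" where
  "max_degree V E = Max (degree V E ` V)"

definition two_connected :: "'a set \<Rightarrow> ('a \<Rightarrow> 'a \<Rightarrow> bool) \<Rightarrow> bool" where
  "two_connected V E \<longleftrightarrow> card V \<ge> 3 \<and> induced_connected E V \<and>
     (\<forall>v\<in>V. induced_connected E (V - {v}))"

end

theory Submission
  imports Defs
begin


definition cnb :: "'a set \<Rightarrow> ('a \<Rightarrow> 'a \<Rightarrow> bool) \<Rightarrow> 'a \<Rightarrow> 'a set" where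
  "cnb V E x = insert x {u\<in>V. E x u}"

definition SI :: "'a set \<Rightarrow> ('a \<Rightarrow> 'a \<Rightarrow> bool) \<Rightarrow> 'a set \<Rightarrow> 'a set set" where
  "SI V E I = {C. C \<subseteq> V \<and> (\<forall>v\<in>I. C \<inter> cnb V E v \<noteq> {v})}"

lemma SI_step:
  assumes fin: "finite V" and vV: "v \<in> V" and cV: "cnb V E v \<subseteq> V"
    and disj: "\<forall>w\<in>I. cnb V E v \<inter> cnb V E w = {}"
    and cD: "card (cnb V E v) \<le> D"
  shows "real (card (SI V E (insert v I))) \<le> (1 - 1/2^D) * real (card (SI V E I))"
proof -
  let ?N = "cnb V E v"
  define T where "T = {C\<in>SI V E I. C \<inter> ?N = {v}}"
  have vN: "v \<in> ?N" by (simp add: cnb_def)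
  have finS: "finite (SI V E I)"
    by (rule finite_subset[of _ "Pow V"]) (auto simp: SI_def fin)
  have TS: "T \<subseteq> SI V E I" by (auto simp: T_def)
  have finT: "finite T" using finS TS finite_subset by blast
  have eq: "SI V E (insert v I) = SI V E I - T" by (auto simp: SI_def T_def)
  define h where "h C = ((C - ?N) \<union> {v}, C \<inter> ?N)" for C
  have inj: "inj_on h (SI V E I)"
  proof (rule inj_onI)
    fix C1 C2 assume "h C1 = h C2"
    hence a: "(C1 - ?N) \<union> {v} = (C2 - ?N) \<union> {v}" and b: "C1 \<inter> ?N = C2 \<inter> ?N"
      by (auto simp: h_def)
    from a have "C1 - ?N = C2 - ?N" using vN by blast
    with b show "C1 = C2" by blast
  qed
  have img: "h ` SI V E I \<subseteq> T \<times> Pow ?N"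
  proof
    fix x assume "x \<in> h ` SI V E I"
    then obtain C where C: "C \<in> SI V E I" and x: "x = h C" by auto
    have "(C - ?N) \<union> {v} \<in> T"
      unfolding T_def SI_def
    proof (intro CollectI conjI ballI)
      show "C - ?N \<union> {v} \<subseteq> V" using C vV by (auto simp: SI_def)
      fix w assume w: "w \<in> I"
      have "(C - ?N \<union> {v}) \<inter> cnb V E w = C \<inter> cnb V E w"
        using disj w vN by blast
      thus "(C - ?N \<union> {v}) \<inter> cnb V E w \<noteq> {w}" using C w by (auto simp: SI_def)
    next
      show "(C - ?N \<union> {v}) \<inter> ?N = {v}" using vN by blast
    qed
    thus "x \<in> T \<times> Pow ?N" using x by (auto simp: h_def)
  qed
  have finN: "finite ?N" using cV fin finite_subset by blast
  have "card (SI V E I) \<le> card (T \<times> Pow ?N)"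
    using card_inj_on_le[OF inj img] finT finN by simp
  also have "\<dots> = card T * 2 ^ card ?N" using finT finN by (simp add: card_cartesian_product card_Pow)
  finally have c1: "real (card (SI V E I)) \<le> real (card T) * 2 ^ card ?N"
    by (metis of_nat_le_iff of_nat_mult of_nat_numeral of_nat_power)
  have "(2::real) ^ card ?N \<le> 2 ^ D" using cD by (intro power_increasing) auto
  hence "real (card T) * 2 ^ card ?N \<le> real (card T) * 2 ^ D" by (intro mult_left_mono) auto
  hence "real (card (SI V E I)) \<le> real (card T) * 2 ^ D" using c1 by linarith
  hence c2: "real (card (SI V E I)) / 2 ^ D \<le> real (card T)"
    by (simp add: divide_le_eq)
  have "card (SI V E (insert v I)) = card (SI V E I) - card T"
    using eq TS finT by (simp add: card_Diff_subset)
  hence "real (card (SI V E (insert v I))) = real (card (SI V E I)) - real (card T)"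
    using card_mono[OF finS TS] by simp
  with c2 show ?thesis by (simp add: algebra_simps)
qed

lemma SI_bound:
  assumes fin: "finite V" and "finite I" "I \<subseteq> V"
    and cnbV: "\<forall>x\<in>V. cnb V E x \<subseteq> V \<and> card (cnb V E x) \<le> D"
    and disj: "\<forall>u\<in>I. \<forall>w\<in>I. u \<noteq> w \<longrightarrow> cnb V E u \<inter> cnb V E w = {}"
  shows "real (card (SI V E I)) \<le> 2 ^ card V * (1 - 1/2^D) ^ card I"
  using assms(2-3) disj
proof (induction I rule: finite_induct)
  case empty
  have "SI V E {} = Pow V" by (auto simp: SI_def)
  thus ?case using fin by (simp add: card_Pow)
next
  case (insert v I)
  have st: "real (card (SI V E (insert v I))) \<le> (1 - 1/2^D) * real (card (SI V E I))"
    apply (rule SI_step[OF fin])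
    using insert cnbV by auto
  have "real (card (SI V E I)) \<le> 2 ^ card V * (1 - 1/2^D) ^ card I"
    using insert by auto
  moreover have "0 \<le> 1 - 1/(2::real)^D" by (simp add: field_simps)
  ultimately have "(1 - 1/2^D) * real (card (SI V E I)) \<le> (1 - 1/2^D) * (2 ^ card V * (1 - 1/2^D) ^ card I)"
    by (rule mult_left_mono)
  with st insert show ?case by (simp add: algebra_simps)
qed



lemma packing:
  assumes fin: "finite V" and sym: "\<forall>u v. E u v \<longrightarrow> E v u"
    and cnbV: "\<forall>x\<in>V. cnb V E x \<subseteq> V \<and> card (cnb V E x) \<le> D"
  shows "W \<subseteq> V \<Longrightarrow> \<exists>I \<subseteq> W. (\<forall>u\<in>I. \<forall>w\<in>I. u \<noteq> w \<longrightarrow> cnb V E u \<inter> cnb V E w = {})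
           \<and> card W \<le> D * D * card I"
proof (induction "card W" arbitrary: W rule: less_induct)
  case less
  show ?case
  proof (cases "W = {}")
    case True thus ?thesis by auto
  next
    case False
    then obtain w where wW: "w \<in> W" by auto
    define R where "R = {x\<in>W. cnb V E x \<inter> cnb V E w \<noteq> {}}"
    have finW: "finite W" using less.prems fin finite_subset by blast
    have wR: "w \<in> R" by (auto simp: R_def cnb_def wW)
    have RW: "R \<subseteq> W" by (auto simp: R_def)
    have lt: "card (W - R) < card W"
      using wR wW finW by (intro psubset_card_mono) auto
    obtain I' where I': "I' \<subseteq> W - R" "\<forall>u\<in>I'. \<forall>w\<in>I'. u \<noteq> w \<longrightarrow> cnb V E u \<inter> cnb V E w = {}"
      "card (W - R) \<le> D * D * card I'"
      using less.hyps[OF lt] less.prems by blast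
    have wV: "w \<in> V" using wW less.prems by auto
    have RU: "R \<subseteq> (\<Union>y\<in>cnb V E w. cnb V E y)"
    proof
      fix x assume "x \<in> R"
      then obtain y where y: "y \<in> cnb V E x" "y \<in> cnb V E w" and xW: "x \<in> W" by (auto simp: R_def)
      have xV: "x \<in> V" using xW less.prems by auto
      have "x \<in> cnb V E y" using y(1) xV sym by (auto simp: cnb_def)
      thus "x \<in> (\<Union>y\<in>cnb V E w. cnb V E y)" using y(2) by blast
    qed
    have finN: "finite (cnb V E w)" using cnbV wV fin finite_subset by blast
    have "card R \<le> card (\<Union>y\<in>cnb V E w. cnb V E y)"
      apply (rule card_mono[OF _ RU])
      using finN cnbV wV fin finite_subset by blast
    also have "\<dots> \<le> (\<Sum>y\<in>cnb V E w. card (cnb V E y))" by (rule card_UN_le[OF finN])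
    also have "\<dots> \<le> card (cnb V E w) * D"
      using sum_bounded_above[of "cnb V E w" "\<lambda>y. card (cnb V E y)" D] cnbV wV by auto
    also have "\<dots> \<le> D * D" using cnbV wV by auto
    finally have cR: "card R \<le> D * D" .
    have "card W \<le> card (W - R) + card R"
      using card_Diff_subset[of R W] RW finW finite_subset[OF RW finW] card_mono[OF finW RW] by simp
    have wI': "w \<notin> I'" using I'(1) wR by auto
    have finI': "finite I'" using I'(1) finW finite_subset by blast
    show ?thesis
    proof (intro exI[of _ "insert w I'"] conjI)
      show "insert w I' \<subseteq> W" using I'(1) wW by auto
      show "\<forall>u\<in>insert w I'. \<forall>x\<in>insert w I'. u \<noteq> x \<longrightarrow> cnb V E u \<inter> cnb V E x = {}"
        using I' by (auto simp: R_def)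
      show "card W \<le> D * D * card (insert w I')"
        using \<open>card W \<le> card (W - R) + card R\<close> I'(3) cR wI' finI' by simp
    qed
  qed
qed



lemma noniso:
  assumes sg: "simple_graph V E" and cs: "connected_set V E C" and Cv: "C \<inter> cnb V E v = {v}"
  shows "C = {v}"
proof -
  have vC: "v \<in> C" using Cv by blast
  have ic: "induced_connected E C" using cs by (simp add: connected_set_def)
  { fix u assume uC: "u \<in> C"
    have r: "(\<lambda>x y. x \<in> C \<and> y \<in> C \<and> E x y)\<^sup>*\<^sup>* v u" using ic vC uC by (simp add: induced_connected_def)
    have "u = v"
    proof (rule converse_rtranclpE[OF r])
      show "v = u \<Longrightarrow> u = v" by simp
    next
      fix x assume "v \<in> C \<and> x \<in> C \<and> E v x" "(\<lambda>x y. x \<in> C \<and> y \<in> C \<and> E x y)\<^sup>*\<^sup>* x u"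
      hence "x \<in> C" "E v x" by auto
      moreover have "x \<in> V" using sg \<open>E v x\<close> by (simp add: simple_graph_def)
      ultimately have "x \<in> C \<inter> cnb V E v" by (simp add: cnb_def)
      hence "x = v" using Cv by blast
      thus "u = v" using \<open>E v x\<close> sg by (simp add: simple_graph_def)
    qed }
  thus ?thesis using vC by blast
qed

lemma single_conn: "v \<in> V \<Longrightarrow> connected_set V E {v}"
  by (simp add: connected_set_def induced_connected_def)

lemma finite_conn: "finite V \<Longrightarrow> finite {C. connected_set V E C}"
  by (rule finite_subset[of _ "Pow V"]) (auto simp: connected_set_def)

lemma nRel_ge_single:
  assumes fin: "finite V" and p: "0 \<le> p" "p \<le> 1"
  shows "real (card V) * p * (1 - p) ^ (card V - 1) \<le> nRel V E p"
proof -
  let ?f = "\<lambda>C. p ^ card C * (1 - p) ^ (card V - card C)"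
  have "(\<Sum>C\<in>(\<lambda>v. {v}) ` V. ?f C) \<le> (\<Sum>C\<in>{C. connected_set V E C}. ?f C)"
    by (rule sum_mono2[OF finite_conn[OF fin]]) (auto simp: single_conn p)
  moreover have "(\<Sum>C\<in>(\<lambda>v. {v}) ` V. ?f C) = (\<Sum>v\<in>V. ?f {v})"
    by (subst sum.reindex) (auto simp: inj_on_def)
  ultimately show ?thesis by (simp add: nRel_def)
qed

lemma nRel_ge_top:
  assumes fin: "finite V" and p: "0 \<le> p" "p \<le> 1" and tc: "two_connected V E"
  shows "p ^ card V + real (card V) * p ^ (card V - 1) * (1 - p) \<le> nRel V E p"
proof -
  let ?f = "\<lambda>C. p ^ card C * (1 - p) ^ (card V - card C)"
  have n3: "card V \<ge> 3" using tc by (simp add: two_connected_def)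
  have n1: "card V - (card V - Suc 0) = 1" using n3 by simp
  have sub: "insert V ((\<lambda>v. V - {v}) ` V) \<subseteq> {C. connected_set V E C}"
    using tc by (auto simp: two_connected_def connected_set_def)
  have "(\<Sum>C\<in>insert V ((\<lambda>v. V - {v}) ` V). ?f C) \<le> (\<Sum>C\<in>{C. connected_set V E C}. ?f C)"
    by (rule sum_mono2[OF finite_conn[OF fin] sub]) (auto simp: p)
  moreover have "V \<notin> (\<lambda>v. V - {v}) ` V" by auto
  hence "(\<Sum>C\<in>insert V ((\<lambda>v. V - {v}) ` V). ?f C) = ?f V + (\<Sum>C\<in>(\<lambda>v. V - {v}) ` V. ?f C)"
    using fin by simp
  moreover have "(\<Sum>C\<in>(\<lambda>v. V - {v}) ` V. ?f C) = (\<Sum>v\<in>V. ?f (V - {v}))"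
    by (subst sum.reindex) (auto simp: inj_on_def)
  moreover have "(\<Sum>v\<in>V. ?f (V - {v})) = real (card V) * (p ^ (card V - 1) * (1 - p))"
  proof -
    have h: "\<And>v. v \<in> V \<Longrightarrow> ?f (V - {v}) = p ^ (card V - 1) * (1 - p)"
    proof -
      fix v assume "v \<in> V"
      hence "card (V - {v}) = card V - 1" using fin by (simp add: card_Diff_singleton)
      moreover have "card V - (card V - 1) = 1" using n3 by simp
      ultimately show "?f (V - {v}) = p ^ (card V - 1) * (1 - p)" by simp
    qed
    have "(\<Sum>v\<in>V. ?f (V - {v})) = (\<Sum>v\<in>V. p ^ (card V - 1) * (1 - p))"
      by (rule sum.cong[OF refl], rule h, assumption)
    thus ?thesis by simp
  qed
  ultimately show ?thesis by (simp add: nRel_def n1 mult.assoc)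
qed

lemma nRel_half:
  assumes fin: "finite V"
  shows "nRel V E (1/2) = real (card {C. connected_set V E C}) / 2 ^ card V"
proof -
  have "\<And>C. connected_set V E C \<Longrightarrow> (1/2::real) ^ card C * (1 - 1/2) ^ (card V - card C) = 1 / 2 ^ card V"
  proof -
    fix C assume "connected_set V E C"
    hence "card C \<le> card V" using fin by (simp add: connected_set_def card_mono)
    hence "(1/2::real) ^ card C * (1/2) ^ (card V - card C) = (1/2) ^ card V"
      by (simp flip: power_add)
    thus "(1/2::real) ^ card C * (1 - 1/2) ^ (card V - card C) = 1 / 2 ^ card V"
      by (simp add: power_divide)
  qed
  thus ?thesis by (simp add: nRel_def)
qed



lemma low_ineq:
  assumes n: "n \<ge> (3::nat)"
  shows "1/(2*real n) < real n * (1/(2*real n)) * (1 - 1/(2*real n)) ^ (n - 1)"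
proof -
  define p where "p = 1/(2*real n)"
  have p0: "0 < p" "p \<le> 1" using n by (auto simp: p_def field_simps)
  have b: "1 + real (n - 1) * (-p) \<le> (1 + (-p)) ^ (n - 1)"
    by (rule Bernoulli_inequality) (use p0 in auto)
  have "real (n - 1) * p \<le> 1/2" using n by (simp add: p_def field_simps of_nat_diff)
  hence "1/2 \<le> (1 - p) ^ (n - 1)" using b by simp
  hence "real n * (1/2) \<le> real n * (1 - p) ^ (n - 1)" by (intro mult_left_mono) auto
  moreover have "1 < real n * (1/2)" using n by simp
  ultimately have "1 < real n * (1 - p) ^ (n - 1)" by linarith
  hence X: "p * 1 < p * (real n * (1 - p) ^ (n - 1))" using p0 by (intro mult_strict_left_mono) auto
  have eq: "real n * p * (1 - p) ^ (n - 1) = p * (real n * (1 - p) ^ (n - 1))" by (simp add: algebra_simps)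
  have "p < real n * p * (1 - p) ^ (n - 1)" unfolding eq using X by simp
  thus ?thesis by (simp only: p_def)
qed

lemma high_ineq:
  assumes n: "n \<ge> (3::nat)"
  shows "1 - 1/(2*real n^2) < (1 - 1/(2*real n^2)) ^ n + real n * (1 - 1/(2*real n^2)) ^ (n - 1) * (1/(2*real n^2))"
proof -
  define q where "q = 1/(2*real n^2)"
  define m where "m = real (n - 1)"
  have "(1::real) \<le> real n ^ 2" using n by (intro one_le_power) simp
  hence h2: "1 \<le> 2 * real n ^ 2" by linarith
  have q0: "0 < q" "q \<le> 1" using n h2 by (auto simp: q_def)
  have mn: "m = real n - 1" using n by (simp add: m_def of_nat_diff)
  have b: "1 + m * (-q) \<le> (1 + (-q)) ^ (n - 1)"
    unfolding m_def by (rule Bernoulli_inequality) (use q0 in auto)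
  define a where "a = (1 - q) ^ (n - 1)"
  have ba: "1 - m*q \<le> a" using b by (simp add: a_def)
  have pn: "(1 - q) ^ n = (1 - q) * a" using n unfolding a_def
    by (metis Suc_diff_1 less_le_trans numeral_3_eq_3 zero_less_Suc power_Suc)
  have nm: "real n = m + 1" using mn by simp
  have "(1 - q) ^ n + real n * a * q = a * (1 + m * q)" unfolding pn nm by (simp add: algebra_simps)
  also have "\<dots> \<ge> (1 - m*q) * (1 + m*q)"
    using ba q0 mn n by (intro mult_right_mono) auto
  finally have ge: "(1 - q) ^ n + real n * a * q \<ge> 1 - (m*q)*(m*q)" by (simp add: algebra_simps)
  have m0: "0 \<le> m" by (simp add: m_def)
  have mm0: "0 \<le> m*m" using m0 by simp
  have "2 * real n^2 = 2*(m*m) + 4*m + 2" unfolding nm by (simp add: algebra_simps power2_eq_square)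
  hence "m*m < 2 * real n^2" using m0 mm0 by linarith
  hence "m*m*q < 1" using n by (simp add: q_def field_simps)
  hence "(m*q)*(m*q) < q" using q0 by (smt (verit) mult.assoc mult.commute mult_less_cancel_right2)
  with ge have "1 - q < (1 - q) ^ n + real n * a * q" by linarith
  thus ?thesis by (simp only: a_def q_def)
qed

lemma four_le_pow: "n \<ge> 4 \<Longrightarrow> 4 * n \<le> (2::nat) ^ n"
proof (induction n rule: dec_induct)
  case base thus ?case by simp
next
  case (step n) thus ?case by simp
qed

lemma cont_g: "isCont (\<lambda>p. nRel V E p - p) x"
  unfolding nRel_def by (intro continuous_intros)



theorem theorem4p3:
  fixes \<Delta> :: nat
  assumes "\<Delta> \<ge> 2"
  shows "\<exists>N::nat. \<forall>(V::nat set) E. simple_graph V E \<and> two_connected V E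
            \<and> max_degree V E = \<Delta> \<and> card V \<ge> N \<longrightarrow>
          (\<exists>p1 p2. p1 \<noteq> p2 \<and> p1 \<in> {0<..<1} \<and> p2 \<in> {0<..<1}
             \<and> nRel V E p1 = p1 \<and> nRel V E p2 = p2)"
proof -
  define D where "D = Suc \<Delta>"
  define c :: real where "c = 1 - 1/2^D"
  have c0: "0 \<le> c" "c < 1" by (auto simp: c_def field_simps)
  obtain M where M: "c ^ M < 1/4" using real_arch_pow_inv[of "1/4" c] c0 by auto
  show ?thesis
  proof (intro exI[of _ "max 4 (D*D*M)"] allI impI)
    fix V :: "nat set" and E
    assume H: "simple_graph V E \<and> two_connected V E \<and> max_degree V E = \<Delta> \<and> max 4 (D*D*M) \<le> card V"
    define n where "n = card V"
    have fin: "finite V" using H by (simp add: simple_graph_def)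
    have sym: "\<forall>u v. E u v \<longrightarrow> E v u" using H by (simp add: simple_graph_def)
    have EV: "\<forall>u v. E u v \<longrightarrow> u \<in> V \<and> v \<in> V" using H by (simp add: simple_graph_def)
    have tc: "two_connected V E" using H by simp
    have n3: "n \<ge> 3" using tc by (simp add: two_connected_def n_def)
    have n4: "n \<ge> 4" "D*D*M \<le> n" using H by (auto simp: n_def)
    have cnbV: "\<forall>x\<in>V. cnb V E x \<subseteq> V \<and> card (cnb V E x) \<le> D"
    proof
      fix x assume xV: "x \<in> V"
      have "degree V E x \<le> \<Delta>" using H xV fin by (auto simp: max_degree_def)
      moreover have "card (cnb V E x) \<le> Suc (degree V E x)"
        unfolding cnb_def degree_def using fin by (simp add: card_insert_if)
      ultimately show "cnb V E x \<subseteq> V \<and> card (cnb V E x) \<le> D"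
        using xV EV by (auto simp: cnb_def D_def)
    qed
    obtain I where I: "I \<subseteq> V" "\<forall>u\<in>I. \<forall>w\<in>I. u \<noteq> w \<longrightarrow> cnb V E u \<inter> cnb V E w = {}"
      "card V \<le> D * D * card I"
      using packing[OF fin sym cnbV, of V] by blast
    have finI: "finite I" using I(1) fin finite_subset by blast
    have "D*D*M \<le> D*D*card I" using le_trans[OF n4(2) I(3)[folded n_def]] .
    moreover have "0 < D*D" by (simp add: D_def)
    ultimately have MI: "M \<le> card I" by simp
    have SIb: "real (card (SI V E I)) \<le> 2 ^ n * c ^ card I"
      using SI_bound[OF fin finI I(1) cnbV I(2)] by (simp add: c_def n_def)
    have "c ^ card I \<le> c ^ M" using c0 MI by (intro power_decreasing) auto
    hence "(2::real) ^ n * c ^ card I < 2 ^ n * (1/4)" using M by (intro mult_strict_left_mono) auto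
    hence SIb2: "real (card (SI V E I)) < 2 ^ n / 4" using SIb by linarith
    have sub: "{C. connected_set V E C} \<subseteq> (\<lambda>v. {v}) ` V \<union> SI V E I"
    proof
      fix C assume "C \<in> {C. connected_set V E C}"
      hence cs: "connected_set V E C" by simp
      show "C \<in> (\<lambda>v. {v}) ` V \<union> SI V E I"
      proof (cases "\<exists>v\<in>I. C \<inter> cnb V E v = {v}")
        case True
        then obtain v where "v \<in> I" "C \<inter> cnb V E v = {v}" by blast
        hence "C = {v}" "v \<in> V" using noniso[OF _ cs] H I(1) by auto
        thus ?thesis by auto
      next
        case False
        thus ?thesis using cs by (auto simp: SI_def connected_set_def)
      qed
    qed
    have finSI: "finite (SI V E I)"
      by (rule finite_subset[of _ "Pow V"]) (auto simp: SI_def fin)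
    have "card {C. connected_set V E C} \<le> card ((\<lambda>v. {v}) ` V \<union> SI V E I)"
      by (rule card_mono[OF _ sub]) (use fin finSI in auto)
    also have "\<dots> \<le> card ((\<lambda>v. {v}) ` V) + card (SI V E I)" by (rule card_Un_le)
    also have "\<dots> \<le> n + card (SI V E I)" using card_image_le[OF fin, of "\<lambda>v. {v}"] by (simp add: n_def)
    finally have cc: "real (card {C. connected_set V E C}) \<le> real n + real (card (SI V E I))" by linarith
    have "real (4 * n) \<le> real (2 ^ n)" using four_le_pow[OF n4(1)] by (simp only: of_nat_le_iff)
    hence "4 * real n \<le> 2 ^ n" by simp
    hence "real (card {C. connected_set V E C}) < 2 ^ n / 2" using cc SIb2 by simp
    hence "real (card {C. connected_set V E C}) / 2 ^ n < (2 ^ n / 2) / 2 ^ n"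
      by (intro divide_strict_right_mono) auto
    hence half: "nRel V E (1/2) < 1/2"
      using nRel_half[OF fin, of E] by (simp add: n_def)
    define g where "g p = nRel V E p - p" for p
    have gc: "\<forall>x. isCont g x" unfolding g_def using cont_g by blast
    define p1 where "p1 = 1/(2*real n)"
    define p2 where "p2 = 1 - 1/(2*real n^2)"
    have p1r: "0 < p1" "p1 < 1/2" using n3 by (auto simp: p1_def field_simps)
    have "(1::real) < real n ^ 2" using n3 by (simp add: power2_eq_square less_1_mult)
    hence p2r: "1/2 < p2" "p2 < 1" using n3 by (auto simp: p2_def field_simps)
    have g1: "0 < g p1"
    proof -
      have "real n * p1 * (1 - p1) ^ (n - 1) \<le> nRel V E p1"
        using nRel_ge_single[OF fin, of p1 E] p1r by (simp add: n_def)
      moreover have "p1 < real n * p1 * (1 - p1) ^ (n - 1)" using low_ineq[OF n3] by (simp add: p1_def)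
      ultimately show ?thesis by (simp add: g_def)
    qed
    have g2: "0 < g p2"
    proof -
      have "p2 ^ n + real n * p2 ^ (n - 1) * (1 - p2) \<le> nRel V E p2"
        using nRel_ge_top[OF fin, of p2 E] p2r tc by (simp add: n_def)
      moreover have "p2 < p2 ^ n + real n * p2 ^ (n - 1) * (1 - p2)" using high_ineq[OF n3] by (simp add: p2_def)
      ultimately show ?thesis by (simp add: g_def)
    qed
    have gh: "g (1/2) < 0" using half by (simp add: g_def)
    obtain x1 where x1: "p1 \<le> x1" "x1 \<le> 1/2" "g x1 = 0"
      using IVT2[of g "1/2" 0 p1] g1 gh p1r gc by auto
    obtain x2 where x2: "1/2 \<le> x2" "x2 \<le> p2" "g x2 = 0"
      using IVT[of g "1/2" 0 p2] g2 gh p2r gc by auto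
    have "x1 \<noteq> 1/2" using x1(3) gh by (metis less_irrefl)
    have "x2 \<noteq> 1/2" using x2(3) gh by (metis less_irrefl)
    show "\<exists>p1 p2. p1 \<noteq> p2 \<and> p1 \<in> {0<..<1} \<and> p2 \<in> {0<..<1} \<and> nRel V E p1 = p1 \<and> nRel V E p2 = p2"
      apply (rule exI[of _ x1], rule exI[of _ x2])
      using x1 x2 p1r p2r \<open>x1 \<noteq> 1/2\<close> \<open>x2 \<noteq> 1/2\<close> by (auto simp: g_def)
  qed
qed

end
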